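(* Let $q>2$ be a prime power and $\ell>1$ an integer. The ideal $I_\ell := \langle x_{i+1}^{q-1}+1-(x_i+1)^{q-1} : i=1,\dots,\ell-1\rangle \subseteq \mathbb{F}_q[x_1,\dots,x_\ell]$ is a prime ideal, and the ideal $I'_\ell := \langle x_{i+1}^{q-1}+z^{q-1}-(x_i+z)^{q-1} : i=1,\dots,\ell-1\rangle \subseteq \mathbb{F}_q[x_1,\dots,x_\ell,z]$ is a homogeneous prime ideal which equals the homogenization of $I_\ell$ (with respect to the variable $z$).
   Context: $\mathbb{F}_q$ denotes the finite field with $q$ elements. The homogenization of an ideal $I\subseteq \mathbb{F}_q[x_1,\dots,x_\ell]$ is the ideal of $\mathbb{F}_q[x_1,\dots,x_\ell,z]$ generated by the homogenizations $z^{\deg f} f(x_1/z,\dots,x_\ell/z)$ of all $f\in I$. *)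

theory Defs
  imports "HOL-Library.Poly_Mapping" "HOL-Algebra.Ideal"
begin

text \<open>Convention: variable index 0 is z, variable index i (i = 1..l) is x_i.\<close>

type_synonym 'a mpoly = "(nat \<Rightarrow>\<^sub>0 nat) \<Rightarrow>\<^sub>0 'a"

definition mvars :: "'a::zero mpoly \<Rightarrow> nat set" where
  "mvars p = (\<Union>m\<in>Poly_Mapping.keys p. Poly_Mapping.keys m)"

definition Var :: "nat \<Rightarrow> 'a::comm_ring_1 mpoly" where
  "Var i = Poly_Mapping.single (Poly_Mapping.single i 1) 1"

definition poly_ring :: "nat set \<Rightarrow> ('a::comm_ring_1 mpoly) ring" where
  "poly_ring V = \<lparr>carrier = {p. mvars p \<subseteq> V}, monoid.mult = (*), one = 1,
                  zero = 0, add = (+)\<rparr>"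

definition mon_deg :: "(nat \<Rightarrow>\<^sub>0 nat) \<Rightarrow> nat" where
  "mon_deg m = (\<Sum>i\<in>Poly_Mapping.keys m. Poly_Mapping.lookup m i)"

definition total_deg :: "'a::zero mpoly \<Rightarrow> nat" where
  "total_deg p = (if p = 0 then 0 else Max (mon_deg ` Poly_Mapping.keys p))"

definition homogeneous :: "'a::zero mpoly \<Rightarrow> bool" where
  "homogeneous p \<longleftrightarrow> (\<forall>m\<in>Poly_Mapping.keys p. mon_deg m = total_deg p)"

text \<open>Homogenization with respect to the variable z (index 0):
  z^(deg f) f(x/z).\<close>
definition homogenize :: "'a::comm_ring_1 mpoly \<Rightarrow> 'a mpoly" where
  "homogenize p = (\<Sum>m\<in>Poly_Mapping.keys p.
      Poly_Mapping.single (m + Poly_Mapping.single 0 (total_deg p - mon_deg m)) (Poly_Mapping.lookup p m))"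

definition homogeneous_ideal :: "('a::comm_ring_1 mpoly) ring \<Rightarrow> 'a mpoly set \<Rightarrow> bool" where
  "homogeneous_ideal R I \<longleftrightarrow> ideal I R \<and>
     (\<exists>G. G \<subseteq> carrier R \<and> (\<forall>g\<in>G. homogeneous g) \<and> I = genideal R G)"

definition homogenization_ideal ::
  "('a::comm_ring_1 mpoly) ring \<Rightarrow> 'a mpoly set \<Rightarrow> 'a mpoly set" where
  "homogenization_ideal R I = genideal R (homogenize ` I)"

end

theory Submission
  imports Defs "HOL-Computational_Algebra.Formal_Power_Series" "HOL-Computational_Algebra.Polynomial"
begin

unbundle fps_syntax

lemma mvars_iff: "i \<in> mvars p \<longleftrightarrow> (\<exists>m\<in>Poly_Mapping.keys p. i \<in> Poly_Mapping.keys m)"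
  by (simp add: mvars_def)

lemma mvars_add: "mvars (p + q) \<subseteq> mvars p \<union> mvars q"
  using keys_add[of p q] by (auto simp: mvars_def)

lemma mvars_uminus[simp]: "mvars (- p) = mvars p"
  by (simp add: mvars_def)

lemma mvars_diff: "mvars (p - q) \<subseteq> mvars p \<union> mvars q"
  using keys_diff[of p q] by (auto simp: mvars_def)

lemma keys_plus_nat: "Poly_Mapping.keys (a + b :: 'x \<Rightarrow>\<^sub>0 nat) = Poly_Mapping.keys a \<union> Poly_Mapping.keys b"
  by (auto simp: in_keys_iff lookup_add)

lemma mvars_mult: "mvars (p * q) \<subseteq> mvars p \<union> mvars q"
proof
  fix i assume "i \<in> mvars (p * q)"
  then obtain m where m: "m \<in> Poly_Mapping.keys (p * q)" "i \<in> Poly_Mapping.keys m"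
    by (auto simp: mvars_def)
  then obtain a b where "m = a + b" "a \<in> Poly_Mapping.keys p" "b \<in> Poly_Mapping.keys q"
    using keys_mult[of p q] by blast
  then show "i \<in> mvars p \<union> mvars q" using m(2) by (auto simp: mvars_def keys_plus_nat)
qed

lemma mvars_zero[simp]: "mvars 0 = {}" by (simp add: mvars_def)
lemma mvars_one[simp]: "mvars 1 = {}" by (simp add: mvars_def)

lemma mvars_single: "mvars (Poly_Mapping.single m c) \<subseteq> Poly_Mapping.keys m"
  by (simp add: mvars_def)

lemma mvars_Var: "mvars (Var i :: 'a::comm_ring_1 mpoly) = {i}"
  by (simp add: mvars_def Var_def)

lemma mvars_pow: "mvars (p ^ n) \<subseteq> mvars p"
proof (induction n)
  case (Suc n) then show ?case using mvars_mult[of p "p^n"] by auto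
qed simp

lemma mvars_sum: "mvars (sum f A) \<subseteq> (\<Union>a\<in>A. mvars (f a))"
proof (induction A rule: infinite_finite_induct)
  case (insert x F) then show ?case using mvars_add[of "f x" "sum f F"] by auto
qed auto

lemma carrier_poly_ring[simp]: "carrier (poly_ring V) = {p. mvars p \<subseteq> V}"
  by (simp add: poly_ring_def)
lemma add_poly_ring[simp]: "add (poly_ring V) = (+)"
  by (simp add: poly_ring_def)
lemma mult_poly_ring[simp]: "monoid.mult (poly_ring V) = (*)"
  by (simp add: poly_ring_def)
lemma one_poly_ring[simp]: "one (poly_ring V) = 1"
  by (simp add: poly_ring_def)
lemma zero_poly_ring[simp]: "zero (poly_ring V) = 0"
  by (simp add: poly_ring_def)

lemma cring_poly_ring: "cring (poly_ring V :: ('a::comm_ring_1 mpoly) ring)"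
proof (rule cringI)
  show "abelian_group (poly_ring V :: ('a::comm_ring_1 mpoly) ring)"
  proof (rule abelian_groupI, goal_cases)
    case (1 x y) then show ?case using mvars_add[of x y] by auto
  next
    case 2 then show ?case by simp
  next
    case (3 x y z) then show ?case by (simp add: add.assoc)
  next
    case (4 x y) then show ?case by (simp add: add.commute)
  next
    case (5 x) then show ?case by simp
  next
    case (6 x) then show ?case by (intro bexI[of _ "-x"]) auto
  qed
  show "comm_monoid (poly_ring V :: ('a::comm_ring_1 mpoly) ring)"
  proof (rule comm_monoidI, goal_cases)
    case (1 x y) then show ?case using mvars_mult[of x y] by auto
  qed (auto simp: mult.assoc mult.commute)
qed (simp add: distrib_right)

lemma a_inv_poly_ring:
  assumes "x \<in> carrier (poly_ring V)"
  shows "a_inv (poly_ring V) x = - (x :: 'a::comm_ring_1 mpoly)"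
proof -
  interpret cring "poly_ring V :: 'a mpoly ring" by (rule cring_poly_ring)
  show ?thesis
    using assms by (intro minus_equality) auto
qed

lemma a_minus_poly_ring:
  assumes "x \<in> carrier (poly_ring V)" "y \<in> carrier (poly_ring V)"
  shows "a_minus (poly_ring V) x y = x - (y :: 'a::comm_ring_1 mpoly)"
  using assms by (simp add: a_minus_def a_inv_poly_ring)


definition mev :: "(nat \<Rightarrow> 'b::comm_semiring_1) \<Rightarrow> (nat \<Rightarrow>\<^sub>0 nat) \<Rightarrow> 'b" where
  "mev e m = (\<Prod>i\<in>Poly_Mapping.keys m. e i ^ Poly_Mapping.lookup m i)"

definition ev :: "('a::comm_ring_1 \<Rightarrow> 'b::comm_ring_1) \<Rightarrow> (nat \<Rightarrow> 'b) \<Rightarrow> 'a mpoly \<Rightarrow> 'b" where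
  "ev \<kappa> e p = (\<Sum>m\<in>Poly_Mapping.keys p. \<kappa> (Poly_Mapping.lookup p m) * mev e m)"

definition rhom :: "('a::comm_ring_1 \<Rightarrow> 'b::comm_ring_1) \<Rightarrow> bool" where
  "rhom \<kappa> \<longleftrightarrow> \<kappa> 0 = 0 \<and> \<kappa> 1 = 1 \<and> (\<forall>a b. \<kappa> (a + b) = \<kappa> a + \<kappa> b) \<and> (\<forall>a b. \<kappa> (a * b) = \<kappa> a * \<kappa> b)"

lemma mev_superset:
  assumes "finite S" "Poly_Mapping.keys m \<subseteq> S"
  shows "mev e m = (\<Prod>i\<in>S. e i ^ Poly_Mapping.lookup m i)"
  unfolding mev_def using assms
  by (intro prod.mono_neutral_left) (auto simp: in_keys_iff)

lemma mev_add: "mev e (a + b) = mev e a * mev e b"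
proof -
  let ?S = "Poly_Mapping.keys a \<union> Poly_Mapping.keys b"
  have "mev e (a + b) = (\<Prod>i\<in>?S. e i ^ Poly_Mapping.lookup (a+b) i)"
    by (rule mev_superset) (auto simp: keys_plus_nat)
  also have "\<dots> = (\<Prod>i\<in>?S. e i ^ Poly_Mapping.lookup a i) * (\<Prod>i\<in>?S. e i ^ Poly_Mapping.lookup b i)"
    by (simp add: lookup_add power_add prod.distrib)
  also have "\<dots> = mev e a * mev e b"
    by (subst (1 2) mev_superset[of ?S]) auto
  finally show ?thesis .
qed

lemma mev_zero[simp]: "mev e 0 = 1"
  by (simp add: mev_def)

lemma mev_single: "mev e (Poly_Mapping.single i n) = e i ^ n"
  by (simp add: mev_def)

lemma rhomD:
  assumes "rhom \<kappa>"
  shows "\<kappa> 0 = 0" "\<kappa> 1 = 1" "\<kappa> (a + b) = \<kappa> a + \<kappa> b" "\<kappa> (a * b) = \<kappa> a * \<kappa> b"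
  using assms by (auto simp: rhom_def)

lemma ev_superset:
  assumes "rhom \<kappa>" "finite S" "Poly_Mapping.keys p \<subseteq> S"
  shows "ev \<kappa> e p = (\<Sum>m\<in>S. \<kappa> (Poly_Mapping.lookup p m) * mev e m)"
  unfolding ev_def using assms
  by (intro sum.mono_neutral_left) (auto simp: in_keys_iff rhomD)

lemma ev_add:
  assumes "rhom \<kappa>"
  shows "ev \<kappa> e (p + q) = ev \<kappa> e p + ev \<kappa> e q"
proof -
  let ?S = "Poly_Mapping.keys p \<union> Poly_Mapping.keys q"
  have "ev \<kappa> e (p + q) = (\<Sum>m\<in>?S. \<kappa> (Poly_Mapping.lookup (p+q) m) * mev e m)"
    using keys_add[of p q] by (intro ev_superset assms) auto
  also have "\<dots> = (\<Sum>m\<in>?S. \<kappa> (Poly_Mapping.lookup p m) * mev e m) + (\<Sum>m\<in>?S. \<kappa> (Poly_Mapping.lookup q m) * mev e m)"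
    by (simp add: lookup_add rhomD[OF assms] distrib_right sum.distrib)
  also have "\<dots> = ev \<kappa> e p + ev \<kappa> e q"
    by (subst (1 2) ev_superset[OF assms, of ?S]) auto
  finally show ?thesis .
qed

lemma ev_zero[simp]: "ev \<kappa> e 0 = 0"
  by (simp add: ev_def)

lemma ev_single:
  assumes "rhom \<kappa>"
  shows "ev \<kappa> e (Poly_Mapping.single m c) = \<kappa> c * mev e m"
  by (simp add: ev_def rhomD[OF assms])

lemma ev_sum:
  assumes "rhom \<kappa>"
  shows "ev \<kappa> e (sum f A) = (\<Sum>a\<in>A. ev \<kappa> e (f a))"
  by (induction A rule: infinite_finite_induct) (auto simp: ev_add[OF assms])

lemma poly_expand: "p = (\<Sum>m\<in>Poly_Mapping.keys p. Poly_Mapping.single m (Poly_Mapping.lookup p m))"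
proof (rule poly_mapping_eqI)
  fix n
  show "Poly_Mapping.lookup p n = Poly_Mapping.lookup (\<Sum>m\<in>Poly_Mapping.keys p. Poly_Mapping.single m (Poly_Mapping.lookup p m)) n"
    by (simp add: lookup_sum lookup_single when_def in_keys_iff)
qed

lemma ev_mult:
  assumes "rhom \<kappa>"
  shows "ev \<kappa> e (p * q) = ev \<kappa> e p * ev \<kappa> e q"
proof -
  let ?P = "Poly_Mapping.keys p" and ?Q = "Poly_Mapping.keys q"
  have "p * q = (\<Sum>m\<in>?P. Poly_Mapping.single m (Poly_Mapping.lookup p m)) * (\<Sum>n\<in>?Q. Poly_Mapping.single n (Poly_Mapping.lookup q n))"
    by (subst (1) poly_expand[of p], subst (1) poly_expand[of q]) (rule refl)
  also have "\<dots> = (\<Sum>m\<in>?P. \<Sum>n\<in>?Q. Poly_Mapping.single (m + n) (Poly_Mapping.lookup p m * Poly_Mapping.lookup q n))"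
    by (simp add: sum_product mult_single)
  finally have pq: "p * q = \<dots>" .
  have "ev \<kappa> e (p * q) = (\<Sum>m\<in>?P. \<Sum>n\<in>?Q. (\<kappa> (Poly_Mapping.lookup p m) * mev e m) * (\<kappa> (Poly_Mapping.lookup q n) * mev e n))"
    unfolding pq by (simp add: ev_sum[OF assms] ev_single[OF assms] rhomD[OF assms] mev_add mult_ac)
  also have "\<dots> = ev \<kappa> e p * ev \<kappa> e q"
    by (simp add: ev_def sum_product)
  finally show ?thesis .
qed

lemma ev_uminus:
  assumes "rhom \<kappa>"
  shows "ev \<kappa> e (- p) = - ev \<kappa> e p"
proof -
  have "ev \<kappa> e p + ev \<kappa> e (- p) = 0"
    using ev_add[OF assms, of e p "-p"] by simp
  then show ?thesis by (simp add: eq_neg_iff_add_eq_0 add.commute)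
qed

lemma ev_diff:
  assumes "rhom \<kappa>"
  shows "ev \<kappa> e (p - q) = ev \<kappa> e p - ev \<kappa> e q"
  using ev_add[OF assms, of e p "-q"] ev_uminus[OF assms, of e q] by simp

lemma ev_one:
  assumes "rhom \<kappa>"
  shows "ev \<kappa> e 1 = 1"
  using ev_single[OF assms, of e 0 1] by (simp add: rhomD[OF assms])

lemma ev_pow:
  assumes "rhom \<kappa>"
  shows "ev \<kappa> e (p ^ n) = ev \<kappa> e p ^ n"
  by (induction n) (simp_all add: ev_one[OF assms] ev_mult[OF assms])

lemma ev_Var:
  assumes "rhom \<kappa>"
  shows "ev \<kappa> e (Var i) = e i"
  by (simp add: Var_def ev_single[OF assms] mev_single rhomD[OF assms])


lemma pow_nth_local:
  fixes A B :: "'a::comm_ring_1 fps"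
  assumes "\<forall>j\<le>n. A $ j = B $ j"
  shows "(A^k) $ n = (B^k) $ n"
  using assms
proof (induction k arbitrary: n)
  case 0 then show ?case by simp
next
  case (Suc k)
  have "(A^Suc k) $ n = (\<Sum>i=0..n. A $ i * (A^k) $ (n - i))" by (simp add: fps_mult_nth)
  also have "\<dots> = (\<Sum>i=0..n. B $ i * (B^k) $ (n - i))"
  proof (intro sum.cong refl)
    fix i assume "i \<in> {0..n}"
    then have "(A^k) $ (n - i) = (B^k) $ (n - i)" using Suc.prems by (intro Suc.IH) auto
    then show "A $ i * (A^k) $ (n - i) = B $ i * (B^k) $ (n - i)" using Suc.prems \<open>i \<in> {0..n}\<close> by simp
  qed
  also have "\<dots> = (B^Suc k) $ n" by (simp add: fps_mult_nth)
  finally show ?case .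
qed

lemma pow_step:
  fixes A :: "'a::comm_ring_1 fps"
  assumes "A $ 0 = 1"
  shows "((A + fps_const c * fps_X^(Suc n))^k) $ (Suc n) = (A^k) $ (Suc n) + of_nat k * c"
proof (cases k)
  case 0 then show ?thesis by simp
next
  case (Suc m)
  define B where "B = fps_const c * fps_X^(Suc n)"
  define S where "S = (\<Sum>p<Suc m. ((A + B) ^ p) * A ^ (m - p))"
  have "(A + B) ^ Suc m - A ^ Suc m = ((A + B) - A) * S"
    unfolding S_def by (rule diff_power_eq_sum)
  also have "\<dots> = fps_const c * (fps_X^(Suc n) * S)" by (simp add: B_def mult_ac)
  finally have eq: "(A + B) ^ Suc m - A ^ Suc m = fps_const c * (fps_X^(Suc n) * S)" .
  have B0: "B $ 0 = 0" by (simp add: B_def)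
  have "S $ 0 = (\<Sum>p<Suc m. ((A + B) ^ p) $ 0 * (A ^ (m - p)) $ 0)"
    by (simp add: S_def fps_sum_nth)
  also have "\<dots> = (\<Sum>p<Suc m. 1)"
    using assms B0 by (intro sum.cong refl) (simp add: fps_power_zeroth)
  finally have S0: "S $ 0 = of_nat (Suc m)" by simp
  have "((A + B) ^ Suc m - A ^ Suc m) $ Suc n = c * of_nat (Suc m)"
    unfolding eq by (simp add: fps_X_power_mult_nth S0 del: power_Suc)
  then show ?thesis unfolding B_def[symmetric] Suc by (simp add: algebra_simps)
qed

lemma cX_nth: "(fps_const c * fps_X^m) $ j = (if j = m then c else 0)"
  by (simp add: fps_X_power_nth del: power_Suc)

fun rseq :: "nat \<Rightarrow> 'a::field fps \<Rightarrow> nat \<Rightarrow> 'a fps" where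
  "rseq k f 0 = 0"
| "rseq k f (Suc n) = rseq k f n + fps_const (((1 + f) $ (Suc n) - ((1 + rseq k f n)^k) $ (Suc n)) / of_nat k) * fps_X^(Suc n)"

lemma rseq_stable: "m \<le> n \<Longrightarrow> j \<le> m \<Longrightarrow> rseq k f n $ j = rseq k f m $ j"
proof (induction n)
  case 0 then show ?case by simp
next
  case (Suc n)
  show ?case
  proof (cases "m \<le> n")
    case True
    then have "rseq k f n $ j = rseq k f m $ j" using Suc by auto
    then show ?thesis using True Suc.prems by (simp add: cX_nth del: power_Suc)
  next
    case False then have "m = Suc n" using Suc.prems by simp
    then show ?thesis by simp
  qed
qed

lemma rseq_0: "rseq k f n $ 0 = 0"
  by (induction n) simp_all

lemma rseq_good:
  fixes f :: "'a::field fps"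
  assumes "of_nat k \<noteq> (0::'a::field)" "f $ 0 = 0"
  shows "\<forall>j\<le>n. ((1 + rseq k f n)^k) $ j = (1 + f) $ j"
proof (induction n)
  case 0
  then show ?case using assms by (simp add: fps_power_zeroth)
next
  case (Suc n)
  show ?case
  proof (intro allI impI)
    fix j assume j: "j \<le> Suc n"
    show "((1 + rseq k f (Suc n))^k) $ j = (1 + f) $ j"
    proof (cases "j \<le> n")
      case True
      have "((1 + rseq k f (Suc n))^k) $ j = ((1 + rseq k f n)^k) $ j"
        using True by (intro pow_nth_local) (simp add: cX_nth del: power_Suc)
      then show ?thesis using Suc True by simp
    next
      case False
      then have jj: "j = Suc n" using j by simp
      have A0: "(1 + rseq k f n) $ 0 = 1" by (simp add: rseq_0)
      have "((1 + rseq k f (Suc n))^k) $ j = ((1 + rseq k f n + fps_const (((1 + f) $ (Suc n) - ((1 + rseq k f n)^k) $ (Suc n)) / of_nat k) * fps_X^(Suc n))^k) $ Suc n"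
        by (simp add: jj add.assoc)
      also have "\<dots> = (1 + f) $ Suc n"
        unfolding pow_step[OF A0] using assms(1) by simp
      finally show ?thesis using jj by simp
    qed
  qed
qed

lemma fps_root_exists:
  fixes f :: "'a::field fps"
  assumes "of_nat k \<noteq> (0::'a::field)" "f $ 0 = 0"
  shows "\<exists>g::'a fps. g $ 0 = 0 \<and> (1 + g)^k = 1 + f"
proof -
  define g where "g = Abs_fps (\<lambda>j. rseq k f j $ j)"
  have g: "j \<le> n \<Longrightarrow> g $ j = rseq k f n $ j" for j n
    by (simp add: g_def rseq_stable)
  have "((1 + g)^k) $ n = (1 + f) $ n" for n
  proof -
    have "((1 + g)^k) $ n = ((1 + rseq k f n)^k) $ n"
      by (intro pow_nth_local) (simp add: g)
    then show ?thesis using rseq_good[OF assms, of n] by simp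
  qed
  then have "(1 + g)^k = 1 + f" by (simp add: fps_eq_iff)
  moreover have "g $ 0 = 0" by (simp add: g_def rseq_0)
  ultimately show ?thesis by blast
qed

lemma root_subdegree:
  fixes f g :: "'a::field fps"
  assumes "(1 + g)^k = 1 + f" "of_nat k \<noteq> (0::'a)" "f \<noteq> 0" "g $ 0 = 0"
  shows "g \<noteq> 0 \<and> subdegree f = subdegree g"
proof -
  obtain m where k: "k = Suc m" using assms(2) by (cases k) auto
  define S where "S = (\<Sum>p<Suc m. ((1 + g) ^ p) * 1 ^ (m - p))"
  have "(1 + g) ^ Suc m - 1 ^ Suc m = ((1 + g) - 1) * S"
    unfolding S_def by (rule diff_power_eq_sum)
  then have f: "f = g * S" using assms(1) k by simp
  have "S $ 0 = (\<Sum>p<Suc m. ((1 + g) ^ p) $ 0)"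
    by (simp add: S_def fps_sum_nth)
  also have "\<dots> = (\<Sum>p<Suc m. 1)"
    using assms(4) by (simp add: fps_power_zeroth)
  finally have S0: "S $ 0 = of_nat k" using k by simp
  then have "S $ 0 \<noteq> 0" using assms(2) by simp
  then have "S \<noteq> 0" "subdegree S = 0" by auto
  moreover have "g \<noteq> 0" using f assms(3) by auto
  ultimately show ?thesis using f by simp
qed

definition froot :: "nat \<Rightarrow> 'a::field fps \<Rightarrow> 'a fps" where
  "froot k f = (SOME g. g $ 0 = 0 \<and> (1 + g)^k = 1 + f)"

lemma froot:
  fixes f :: "'a::field fps"
  assumes "of_nat k \<noteq> (0::'a::field)" "f $ 0 = 0"
  shows "froot k f $ 0 = 0" "(1 + froot k f)^k = 1 + f"
  using someI_ex[OF fps_root_exists[OF assms]] unfolding froot_def by auto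

fun Xr :: "nat \<Rightarrow> nat \<Rightarrow> 'a::field fps" where
  "Xr k 0 = fps_X"
| "Xr k (Suc n) = froot k ((Xr k n)^k)"

lemma Xr_props:
  assumes "of_nat k \<noteq> (0::'a::field)"
  shows "(Xr k n :: 'a fps) \<noteq> 0 \<and> subdegree (Xr k n :: 'a fps) = k^n \<and> (Xr k n :: 'a fps) $ 0 = 0"
proof (induction n)
  case 0 then show ?case by simp
next
  case (Suc n)
  have kpos: "k > 0" using assms by (cases k) auto
  let ?f = "(Xr k n :: 'a fps)^k"
  have f0: "?f $ 0 = 0" using Suc kpos by (simp add: fps_power_zeroth)
  have fnz: "?f \<noteq> 0" using Suc by simp
  have r: "(1 + Xr k (Suc n))^k = 1 + ?f" "(Xr k (Suc n) :: 'a fps) $ 0 = 0"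
    using froot[OF assms f0] by simp_all
  from root_subdegree[OF r(1) assms fnz r(2)]
  show ?case using Suc r(2) by simp
qed

lemma Xr_rel:
  assumes "of_nat k \<noteq> (0::'a::field)"
  shows "(1 + (Xr k (Suc n) :: 'a fps))^k = 1 + (Xr k n)^k"
proof -
  have kpos: "k > 0" using assms by (cases k) auto
  have f0: "((Xr k n :: 'a fps)^k) $ 0 = 0" using Xr_props[OF assms, of n] kpos by (simp add: fps_power_zeroth)
  show ?thesis using froot(2)[OF assms f0] by simp
qed


definition Xf :: "nat \<Rightarrow> nat \<Rightarrow> nat \<Rightarrow> 'a::field fps" where
  "Xf k l i = (if i = 0 then 1 else Xr k (l - i))"

definition nu :: "nat \<Rightarrow> nat \<Rightarrow> (nat \<Rightarrow>\<^sub>0 nat) \<Rightarrow> nat" where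
  "nu k n a = (\<Sum>i\<in>{1..n}. Poly_Mapping.lookup a i * k ^ (n - i))"

definition red_mon :: "nat \<Rightarrow> nat \<Rightarrow> (nat \<Rightarrow>\<^sub>0 nat) \<Rightarrow> bool" where
  "red_mon k l a \<longleftrightarrow> (\<forall>j\<in>{2..l}. Poly_Mapping.lookup a j < k)"

lemma nu_Suc: "nu k (Suc n) a = k * nu k n a + Poly_Mapping.lookup a (Suc n)"
proof -
  have "nu k (Suc n) a = (\<Sum>i\<in>{1..n}. Poly_Mapping.lookup a i * k ^ (Suc n - i)) + Poly_Mapping.lookup a (Suc n)"
    by (simp add: nu_def)
  also have "(\<Sum>i\<in>{1..n}. Poly_Mapping.lookup a i * k ^ (Suc n - i)) = k * nu k n a"
    unfolding nu_def sum_distrib_left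
    by (intro sum.cong refl) (simp add: Suc_diff_le)
  finally show ?thesis .
qed

lemma nu_inj_aux:
  assumes "\<forall>j\<in>{2..n}. Poly_Mapping.lookup a j < k \<and> Poly_Mapping.lookup b j < k"
    and "nu k n a = nu k n b"
  shows "\<forall>i\<in>{1..n}. Poly_Mapping.lookup a i = Poly_Mapping.lookup b i"
  using assms
proof (induction n)
  case 0 then show ?case by simp
next
  case (Suc n)
  show ?case
  proof (cases n)
    case 0 then show ?thesis using Suc.prems by (simp add: nu_def)
  next
    case (Suc n')
    have lt: "Poly_Mapping.lookup a (Suc n) < k" "Poly_Mapping.lookup b (Suc n) < k"
      using Suc.prems(1) \<open>n = Suc n'\<close> by auto
    have eq: "k * nu k n a + Poly_Mapping.lookup a (Suc n) = k * nu k n b + Poly_Mapping.lookup b (Suc n)"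
      using Suc.prems(2) by (simp add: nu_Suc)
    have k0: "k > 0" using lt by simp
    have e1: "Poly_Mapping.lookup a (Suc n) = Poly_Mapping.lookup b (Suc n)"
      using arg_cong[OF eq, of "\<lambda>x. x mod k"] lt by simp
    have e2: "nu k n a = nu k n b"
      using eq e1 k0 by simp
    have "\<forall>i\<in>{1..n}. Poly_Mapping.lookup a i = Poly_Mapping.lookup b i"
      using Suc.prems(1) e2 by (intro Suc.IH) auto
    then show ?thesis using e1 by (auto simp: le_Suc_eq)
  qed
qed

lemma nu_inj:
  assumes "Poly_Mapping.keys a \<subseteq> {1..l}" "Poly_Mapping.keys b \<subseteq> {1..l}"
    "red_mon k l a" "red_mon k l b" "nu k l a = nu k l b"
  shows "a = b"
proof (rule poly_mapping_eqI)
  fix i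
  show "Poly_Mapping.lookup a i = Poly_Mapping.lookup b i"
  proof (cases "i \<in> {1..l}")
    case True then show ?thesis using nu_inj_aux[of l a k b] assms by (auto simp: red_mon_def)
  next
    case False
    then have "i \<notin> Poly_Mapping.keys a" "i \<notin> Poly_Mapping.keys b" using assms by auto
    then show ?thesis by (simp add: in_keys_iff)
  qed
qed

context
  fixes k l :: nat
  assumes kne: "of_nat k \<noteq> (0::'a::field)"
begin

lemma Xf_nz: "i \<in> {1..l} \<Longrightarrow> (Xf k l i :: 'a fps) \<noteq> 0 \<and> subdegree (Xf k l i :: 'a fps) = k ^ (l - i)"
  using Xr_props[OF kne, of "l - i"] by (simp add: Xf_def)

lemma mev_Xf:
  assumes "Poly_Mapping.keys a \<subseteq> {1..l}"
  shows "(mev (Xf k l) a :: 'a fps) \<noteq> 0 \<and> subdegree (mev (Xf k l) a :: 'a fps) = nu k l a"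
proof -
  have m: "(mev (Xf k l) a :: 'a fps) = (\<Prod>i\<in>{1..l}. Xf k l i ^ Poly_Mapping.lookup a i)"
    by (rule mev_superset) (use assms in auto)
  have nz: "\<And>i. i \<in> {1..l} \<Longrightarrow> (Xf k l i :: 'a fps) ^ Poly_Mapping.lookup a i \<noteq> 0"
    using Xf_nz by simp
  have "(\<Prod>i\<in>{1..l}. (Xf k l i :: 'a fps) ^ Poly_Mapping.lookup a i) \<noteq> 0"
    using nz by (simp add: prod_zero_iff)
  moreover have "subdegree (\<Prod>i\<in>{1..l}. (Xf k l i :: 'a fps) ^ Poly_Mapping.lookup a i) = nu k l a"
  proof -
    have "subdegree (\<Prod>i\<in>{1..l}. (Xf k l i :: 'a fps) ^ Poly_Mapping.lookup a i)
       = (\<Sum>i\<in>{1..l}. subdegree ((Xf k l i :: 'a fps) ^ Poly_Mapping.lookup a i))"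
      by (rule subdegree_prod) (rule nz)
    also have "\<dots> = nu k l a" unfolding nu_def
      by (intro sum.cong refl) (simp add: Xf_nz)
    finally show ?thesis .
  qed
  ultimately show ?thesis using m by simp
qed

lemma indep:
  assumes "finite A" "\<forall>a\<in>A. Poly_Mapping.keys a \<subseteq> {1..l} \<and> red_mon k l a"
    and "(\<Sum>a\<in>A. fps_const (c a) * (mev (Xf k l) a :: 'a fps)) = 0"
  shows "\<forall>a\<in>A. c a = 0"
proof (rule ccontr)
  assume nall: "\<not> (\<forall>a\<in>A. c a = 0)"
  define B where "B = {a\<in>A. c a \<noteq> 0}"
  have B: "finite B" "B \<noteq> {}" using assms(1) nall by (auto simp: B_def)
  have "Min (nu k l ` B) \<in> nu k l ` B" using B by simp
  then obtain a0 where a00: "a0 \<in> B" "nu k l a0 = Min (nu k l ` B)" by auto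
  have a0: "a0 \<in> B" "\<And>b. b \<in> B \<Longrightarrow> nu k l a0 \<le> nu k l b"
    using a00 B(1) by auto
  have sumB: "(\<Sum>a\<in>B. fps_const (c a) * (mev (Xf k l) a :: 'a fps)) = 0"
  proof -
    have "(\<Sum>a\<in>B. fps_const (c a) * (mev (Xf k l) a :: 'a fps)) = (\<Sum>a\<in>A. fps_const (c a) * (mev (Xf k l) a :: 'a fps))"
      using assms(1) unfolding B_def by (intro sum.mono_neutral_left) auto
    then show ?thesis using assms(3) by simp
  qed
  have "(\<Sum>a\<in>B. fps_const (c a) * (mev (Xf k l) a :: 'a fps)) $ nu k l a0
        = (\<Sum>a\<in>B. c a * (mev (Xf k l) a :: 'a fps) $ nu k l a0)"
    by (simp add: fps_sum_nth)
  also have "\<dots> = c a0 * (mev (Xf k l) a0 :: 'a fps) $ nu k l a0"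
  proof (rule sum.remove[OF B(1) a0(1), THEN trans], simp, rule sum.neutral, intro ballI)
    fix b assume b: "b \<in> B - {a0}"
    have "nu k l b \<noteq> nu k l a0"
      using b a0(1) nu_inj[of b l a0 k] assms(2) unfolding B_def by auto
    then have "nu k l a0 < subdegree (mev (Xf k l) b :: 'a fps)"
      using a0(2)[of b] b mev_Xf[of b] assms(2) unfolding B_def by auto
    then show "c b * (mev (Xf k l) b :: 'a fps) $ nu k l a0 = 0" by auto
  qed
  finally have "c a0 * (mev (Xf k l) a0 :: 'a fps) $ nu k l a0 = 0"
    using sumB by simp
  moreover have "(mev (Xf k l) a0 :: 'a fps) $ nu k l a0 \<noteq> 0"
    using mev_Xf[of a0] assms(2) a0(1) unfolding B_def
    by (metis (mono_tags, lifting) mem_Collect_eq nth_subdegree_nonzero)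
  ultimately show False using a0(1) unfolding B_def by simp
qed

end


context
  fixes J :: "'a::comm_ring_1 mpoly set" and V :: "nat set"
  assumes J: "ideal J (poly_ring V)"
begin

lemma J_carrier: "x \<in> J \<Longrightarrow> mvars x \<subseteq> V"
  using ideal.Icarr[OF J] by fastforce

lemma J_zero: "0 \<in> J"
  using additive_subgroup.zero_closed[OF ideal.axioms(1)[OF J]] by simp

lemma J_add: "x \<in> J \<Longrightarrow> y \<in> J \<Longrightarrow> x + y \<in> J"
  using additive_subgroup.a_closed[OF ideal.axioms(1)[OF J]] by fastforce

lemma J_mult: "x \<in> J \<Longrightarrow> mvars y \<subseteq> V \<Longrightarrow> y * x \<in> J"
  using ideal.I_l_closed[OF J, of x y] by simp

lemma J_uminus: "x \<in> J \<Longrightarrow> - x \<in> J"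
  using additive_subgroup.a_inv_closed[OF ideal.axioms(1)[OF J], of x] J_carrier[of x]
  by (simp add: a_inv_poly_ring)

lemma J_diff: "x \<in> J \<Longrightarrow> y \<in> J \<Longrightarrow> x - y \<in> J"
  using J_add[of x "-y"] J_uminus[of y] by simp

lemma J_sum: "(\<And>a. a \<in> A \<Longrightarrow> f a \<in> J) \<Longrightarrow> sum f A \<in> J"
  by (induction A rule: infinite_finite_induct) (auto simp: J_zero J_add)

end

lemma Var_pow: "(Var j :: 'a::comm_ring_1 mpoly) ^ n = Poly_Mapping.single (Poly_Mapping.single j n) 1"
proof (induction n)
  case 0 then show ?case by simp
next
  case (Suc n)
  have "(Var j :: 'a mpoly) ^ Suc n = Var j * Poly_Mapping.single (Poly_Mapping.single j n) 1"
    using Suc by simp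
  also have "\<dots> = Poly_Mapping.single (Poly_Mapping.single j 1 + Poly_Mapping.single j n) 1"
    by (simp add: Var_def mult_single)
  also have "Poly_Mapping.single j 1 + Poly_Mapping.single j n = Poly_Mapping.single j (Suc n)"
    by (simp add: single_add[symmetric])
  finally show ?case .
qed

lemma keys_const_mult: "Poly_Mapping.keys (Poly_Mapping.single 0 c * r) \<subseteq> Poly_Mapping.keys r"
proof
  fix x assume "x \<in> Poly_Mapping.keys (Poly_Mapping.single 0 c * r)"
  then obtain a b where "x = a + b" "a \<in> Poly_Mapping.keys (Poly_Mapping.single 0 c)" "b \<in> Poly_Mapping.keys r"
    using keys_mult by blast
  then show "x \<in> Poly_Mapping.keys r" by (auto split: if_splits)
qed

lemma mvars_const_mult: "mvars (Poly_Mapping.single 0 c * r) \<subseteq> mvars r"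
  using keys_const_mult by (force simp: mvars_def)

definition red_poly :: "nat \<Rightarrow> nat \<Rightarrow> 'a::zero mpoly \<Rightarrow> bool" where
  "red_poly k l p \<longleftrightarrow> (\<forall>m\<in>Poly_Mapping.keys p. red_mon k l m)"

lemma red_poly_sum: "(\<And>a. a \<in> A \<Longrightarrow> red_poly k l (f a)) \<Longrightarrow> red_poly k l (sum f A)"
  using keys_sum[of f A] unfolding red_poly_def by blast

lemma red_poly_const_mult: "red_poly k l r \<Longrightarrow> red_poly k l (Poly_Mapping.single 0 c * r)"
  using keys_const_mult unfolding red_poly_def by blast

definition mu :: "nat \<Rightarrow> (nat \<Rightarrow>\<^sub>0 nat) \<Rightarrow> nat" where
  "mu l a = (\<Sum>j\<in>{2..l}. j * Poly_Mapping.lookup a j)"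

lemma mu_add: "mu l (a + b) = mu l a + mu l b"
  by (simp add: mu_def lookup_add algebra_simps sum.distrib)

section \<open>Reduction\<close>

locale reduction =
  fixes J :: "'a::comm_ring_1 mpoly set" and V :: "nat set" and k l :: nat
    and G H :: "nat \<Rightarrow> 'a mpoly"
  assumes J: "ideal J (poly_ring V)"
    and V: "V \<subseteq> {0..l}"
    and k: "k > 0"
    and G: "\<And>i. i \<in> {1..l-1} \<Longrightarrow> G i \<in> J"
    and GH: "\<And>i. i \<in> {1..l-1} \<Longrightarrow> Var (i+1) ^ k = G i + H i"
    and Hc: "\<And>i. i \<in> {1..l-1} \<Longrightarrow> mvars (H i) \<subseteq> V"
    and Hm: "\<And>i m j. i \<in> {1..l-1} \<Longrightarrow> m \<in> Poly_Mapping.keys (H i) \<Longrightarrow> 2 \<le> j \<Longrightarrow> j \<noteq> i \<Longrightarrow> Poly_Mapping.lookup m j = 0"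
    and Hi: "\<And>i m. i \<in> {1..l-1} \<Longrightarrow> m \<in> Poly_Mapping.keys (H i) \<Longrightarrow> Poly_Mapping.lookup m i \<le> k"
begin

lemma mu_H:
  assumes "i \<in> {1..l-1}" "m \<in> Poly_Mapping.keys (H i)"
  shows "mu l m \<le> i * k"
proof -
  have "mu l m = (\<Sum>j\<in>{2..l}. if j = i then i * Poly_Mapping.lookup m i else 0)"
    unfolding mu_def using Hm[OF assms] by (intro sum.cong refl) auto
  also have "\<dots> \<le> i * Poly_Mapping.lookup m i"
    by (simp add: sum.delta)
  also have "\<dots> \<le> i * k" using Hi[OF assms] by simp
  finally show ?thesis .
qed

lemma mon_reduce:
  "Poly_Mapping.keys a \<subseteq> V \<Longrightarrow> \<exists>r. mvars r \<subseteq> V \<and> red_poly k l r \<and> Poly_Mapping.single a 1 - r \<in> J"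
proof (induction "mu l a" arbitrary: a rule: less_induct)
  case less
  show ?case
  proof (cases "red_mon k l a")
    case True
    then show ?thesis
      using less.prems mvars_single[of a 1]
      by (intro exI[of _ "Poly_Mapping.single a 1"]) (auto simp: red_poly_def J_zero[OF J])
  next
    case False
    then obtain j where j: "j \<in> {2..l}" "Poly_Mapping.lookup a j \<ge> k"
      by (auto simp: red_mon_def not_less)
    define i where "i = j - 1"
    have i: "i \<in> {1..l-1}" "j = i + 1" using j by (auto simp: i_def)
    define b where "b = a - Poly_Mapping.single j k"
    have ab: "a = b + Poly_Mapping.single j k"
      by (rule poly_mapping_eqI) (use j in \<open>auto simp: b_def lookup_add lookup_minus lookup_single when_def\<close>)
    have keysb: "Poly_Mapping.keys b \<subseteq> V"
      using less.prems ab by (auto simp: keys_plus_nat)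
    have mua: "mu l a = mu l b + j * k"
    proof -
      have "(\<Sum>ja\<in>{2..l}. ja * (if j = ja then k else 0)) = (\<Sum>ja\<in>{2..l}. if ja = j then j*k else 0)"
        by (rule sum.cong) auto
      then show ?thesis
        unfolding ab mu_add using j by (simp add: mu_def lookup_single when_def sum.delta)
    qed
    have "\<forall>m\<in>Poly_Mapping.keys (H i). \<exists>r. mvars r \<subseteq> V \<and> red_poly k l r \<and> Poly_Mapping.single (b + m) 1 - r \<in> J"
    proof
      fix m assume m: "m \<in> Poly_Mapping.keys (H i)"
      have "mu l (b + m) < mu l a"
        using mu_H[OF i(1) m] mua i(2) k by (simp add: mu_add)
      moreover have "Poly_Mapping.keys (b + m) \<subseteq> V"
        using keysb Hc[OF i(1)] m by (auto simp: keys_plus_nat mvars_def)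
      ultimately show "\<exists>r. mvars r \<subseteq> V \<and> red_poly k l r \<and> Poly_Mapping.single (b + m) 1 - r \<in> J"
        by (rule less.hyps)
    qed
    then obtain rr where rr: "\<And>m. m \<in> Poly_Mapping.keys (H i) \<Longrightarrow> mvars (rr m) \<subseteq> V \<and> red_poly k l (rr m) \<and> Poly_Mapping.single (b + m) 1 - rr m \<in> J"
      by metis
    define r where "r = (\<Sum>m\<in>Poly_Mapping.keys (H i). Poly_Mapping.single 0 (Poly_Mapping.lookup (H i) m) * rr m)"
    have rV: "mvars r \<subseteq> V"
      unfolding r_def using mvars_sum mvars_const_mult rr by fast
    have rred: "red_poly k l r"
      unfolding r_def by (intro red_poly_sum red_poly_const_mult) (use rr in blast)
    have "Poly_Mapping.single a 1 = Poly_Mapping.single b 1 * Var j ^ k"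
      by (simp add: Var_pow mult_single ab)
    also have "\<dots> = Poly_Mapping.single b 1 * G i + Poly_Mapping.single b 1 * H i"
      using GH[OF i(1)] i(2) by (simp add: distrib_left)
    also have "Poly_Mapping.single b 1 * H i = (\<Sum>m\<in>Poly_Mapping.keys (H i). Poly_Mapping.single 0 (Poly_Mapping.lookup (H i) m) * Poly_Mapping.single (b + m) 1)"
      by (subst (1) poly_expand[of "H i"]) (simp add: sum_distrib_left mult_single)
    finally have "Poly_Mapping.single a 1 - r = Poly_Mapping.single b 1 * G i +
       (\<Sum>m\<in>Poly_Mapping.keys (H i). Poly_Mapping.single 0 (Poly_Mapping.lookup (H i) m) * (Poly_Mapping.single (b + m) 1 - rr m))"
      by (simp add: r_def right_diff_distrib sum_subtractf)
    also have "\<dots> \<in> J"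
    proof (intro J_add[OF J] J_sum[OF J])
      show "Poly_Mapping.single b 1 * G i \<in> J"
        using J_mult[OF J G[OF i(1)]] mvars_single[of b 1] keysb by blast
      fix m assume "m \<in> Poly_Mapping.keys (H i)"
      then show "Poly_Mapping.single 0 (Poly_Mapping.lookup (H i) m) * (Poly_Mapping.single (b + m) 1 - rr m) \<in> J"
        using J_mult[OF J, of _ "Poly_Mapping.single 0 (Poly_Mapping.lookup (H i) m)"] rr mvars_single[of 0]
        by fastforce
    qed
    finally show ?thesis using rV rred by blast
  qed
qed

lemma poly_reduce:
  assumes "mvars p \<subseteq> V"
  shows "\<exists>r. mvars r \<subseteq> V \<and> red_poly k l r \<and> p - r \<in> J"
proof -
  have "\<forall>a\<in>Poly_Mapping.keys p. \<exists>r. mvars r \<subseteq> V \<and> red_poly k l r \<and> Poly_Mapping.single a 1 - r \<in> J"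
    using mon_reduce assms by (auto simp: mvars_def)
  then obtain rr where rr: "\<And>a. a \<in> Poly_Mapping.keys p \<Longrightarrow> mvars (rr a) \<subseteq> V \<and> red_poly k l (rr a) \<and> Poly_Mapping.single a 1 - rr a \<in> J"
    by metis
  define r where "r = (\<Sum>a\<in>Poly_Mapping.keys p. Poly_Mapping.single 0 (Poly_Mapping.lookup p a) * rr a)"
  have rV: "mvars r \<subseteq> V"
    unfolding r_def using mvars_sum mvars_const_mult rr by fast
  have rred: "red_poly k l r"
    unfolding r_def by (intro red_poly_sum red_poly_const_mult) (use rr in blast)
  have "p = (\<Sum>a\<in>Poly_Mapping.keys p. Poly_Mapping.single 0 (Poly_Mapping.lookup p a) * Poly_Mapping.single a 1)"
    by (subst (1) poly_expand) (simp add: mult_single)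
  then have "p - r = (\<Sum>a\<in>Poly_Mapping.keys p. Poly_Mapping.single 0 (Poly_Mapping.lookup p a) * (Poly_Mapping.single a 1 - rr a))"
    by (simp add: r_def right_diff_distrib sum_subtractf)
  also have "\<dots> \<in> J"
  proof (intro J_sum[OF J])
    fix a assume "a \<in> Poly_Mapping.keys p"
    then show "Poly_Mapping.single 0 (Poly_Mapping.lookup p a) * (Poly_Mapping.single a 1 - rr a) \<in> J"
      using J_mult[OF J, of _ "Poly_Mapping.single 0 (Poly_Mapping.lookup p a)"] rr mvars_single[of 0]
      by fastforce
  qed
  finally show ?thesis using rV rred by blast
qed

end


lemma ker_ideal:
  fixes \<kappa> :: "'a::comm_ring_1 \<Rightarrow> 'b::comm_ring_1"
  assumes hom: "rhom \<kappa>"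
  shows "ideal {p. mvars p \<subseteq> V \<and> ev \<kappa> e p = 0} (poly_ring V)"
proof -
  interpret cring "poly_ring V :: 'a mpoly ring" by (rule cring_poly_ring)
  show ?thesis
  proof (rule idealI)
    show "ring (poly_ring V :: 'a mpoly ring)" by (rule cring.axioms(1)[OF cring_poly_ring])
    show "subgroup {p. mvars p \<subseteq> V \<and> ev \<kappa> e p = 0} (add_monoid (poly_ring V))"
    proof (rule add.subgroupI, goal_cases)
      case 1 show ?case by auto
    next
      case 2 have "0 \<in> {p. mvars p \<subseteq> V \<and> ev \<kappa> e p = 0}" by simp
      then show ?case by blast
    next
      case (3 a) then show ?case
        by (simp add: a_inv_def[symmetric] a_inv_poly_ring ev_uminus[OF hom])
    next
      case (4 a b) then show ?case
        using mvars_add[of a b] by (auto simp: ev_add[OF hom])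
    qed
  next
    fix a x assume "a \<in> {p. mvars p \<subseteq> V \<and> ev \<kappa> e p = 0}" "x \<in> carrier (poly_ring V :: 'a mpoly ring)"
    then show "x \<otimes>\<^bsub>(poly_ring V :: 'a mpoly ring)\<^esub> a \<in> {p. mvars p \<subseteq> V \<and> ev \<kappa> e p = 0}"
      using mvars_mult[of x a] by (auto simp: ev_mult[OF hom])
  next
    fix a x assume "a \<in> {p. mvars p \<subseteq> V \<and> ev \<kappa> e p = 0}" "x \<in> carrier (poly_ring V :: 'a mpoly ring)"
    then show "a \<otimes>\<^bsub>(poly_ring V :: 'a mpoly ring)\<^esub> x \<in> {p. mvars p \<subseteq> V \<and> ev \<kappa> e p = 0}"
      using mvars_mult[of a x] by (auto simp: ev_mult[OF hom])
  qed
qed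

locale kernel_red = reduction J V k l G H
  for J :: "'a::comm_ring_1 mpoly set" and V k l G H +
  fixes \<kappa> :: "'a \<Rightarrow> 'b::idom" and e :: "nat \<Rightarrow> 'b"
  assumes hom: "rhom \<kappa>"
    and Jdef: "J = genideal (poly_ring V) (G ` {1..l-1})"
    and Gc: "\<And>i. i \<in> {1..l-1} \<Longrightarrow> mvars (G i) \<subseteq> V"
    and Gz: "\<And>i. i \<in> {1..l-1} \<Longrightarrow> ev \<kappa> e (G i) = 0"
    and inj: "\<And>r. mvars r \<subseteq> V \<Longrightarrow> red_poly k l r \<Longrightarrow> ev \<kappa> e r = 0 \<Longrightarrow> r = 0"
begin

lemma J_eq: "J = {p. mvars p \<subseteq> V \<and> ev \<kappa> e p = 0}"
proof
  interpret cring "poly_ring V :: 'a mpoly ring" by (rule cring_poly_ring)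
  show "J \<subseteq> {p. mvars p \<subseteq> V \<and> ev \<kappa> e p = 0}"
    unfolding Jdef by (rule genideal_minimal[OF ker_ideal[OF hom]]) (use Gc Gz in blast)
  show "{p. mvars p \<subseteq> V \<and> ev \<kappa> e p = 0} \<subseteq> J"
  proof
    fix p assume p: "p \<in> {p. mvars p \<subseteq> V \<and> ev \<kappa> e p = 0}"
    then obtain r where r: "mvars r \<subseteq> V" "red_poly k l r" "p - r \<in> J"
      using poly_reduce[of p] p by blast
    have "ev \<kappa> e (p - r) = 0"
      using r(3) \<open>J \<subseteq> _\<close> by blast
    then have "ev \<kappa> e r = 0" using p by (simp add: ev_diff[OF hom])
    then have "r = 0" using inj r by blast
    then show "p \<in> J" using r by simp
  qed
qed

lemma J_prime: "primeideal J (poly_ring V)"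
proof (rule primeidealI)
  show "ideal J (poly_ring V)" by (rule J)
  show "cring (poly_ring V)" by (rule cring_poly_ring)
  have "(1::'a mpoly) \<notin> J" unfolding J_eq using ev_one[OF hom, of e] by simp
  then show "carrier (poly_ring V) \<noteq> J" by auto
  fix a b assume "a \<in> carrier (poly_ring V)" "b \<in> carrier (poly_ring V)" "a \<otimes>\<^bsub>poly_ring V\<^esub> b \<in> J"
  then show "a \<in> J \<or> b \<in> J" unfolding J_eq by (auto simp: ev_mult[OF hom])
qed

end


definition supp_le :: "nat \<Rightarrow> nat \<Rightarrow> 'a::zero mpoly \<Rightarrow> bool" where
  "supp_le i d p \<longleftrightarrow> (\<forall>m\<in>Poly_Mapping.keys p. Poly_Mapping.lookup m i \<le> d)"

lemma supp_le_add: "supp_le i d p \<Longrightarrow> supp_le i d q \<Longrightarrow> supp_le i d (p + q)"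
  using keys_add[of p q] by (auto simp: supp_le_def)

lemma supp_le_diff: "supp_le i d p \<Longrightarrow> supp_le i d q \<Longrightarrow> supp_le i d (p - q)"
  using keys_diff[of p q] by (auto simp: supp_le_def)

lemma supp_le_mono: "supp_le i d p \<Longrightarrow> d \<le> d' \<Longrightarrow> supp_le i d' p"
  by (auto simp: supp_le_def)

lemma supp_le_mult: "supp_le i d p \<Longrightarrow> supp_le i d' q \<Longrightarrow> supp_le i (d + d') (p * q)"
proof -
  assume a: "supp_le i d p" "supp_le i d' q"
  show ?thesis unfolding supp_le_def
  proof
    fix m assume "m \<in> Poly_Mapping.keys (p * q)"
    then obtain x y where "m = x + y" "x \<in> Poly_Mapping.keys p" "y \<in> Poly_Mapping.keys q"
      using keys_mult by blast
    then show "Poly_Mapping.lookup m i \<le> d + d'" using a by (auto simp: supp_le_def lookup_add add_mono)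
  qed
qed

lemma supp_le_pow: "supp_le i d p \<Longrightarrow> supp_le i (n * d) (p ^ n)"
proof (induction n)
  case 0 then show ?case by (simp add: supp_le_def)
next
  case (Suc n) then show ?case using supp_le_mult[of i d p "n*d" "p^n"] by simp
qed

lemma supp_le_one: "supp_le i 0 (1 :: 'a::comm_ring_1 mpoly)"
  by (simp add: supp_le_def)

lemma supp_le_Var: "supp_le i (if j = i then 1 else 0) (Var j :: 'a::comm_ring_1 mpoly)"
  by (simp add: supp_le_def Var_def lookup_single)

lemma of_nat_card_zero: "of_nat (card (UNIV :: 'a set)) = (0::'a::{finite,ring_1})"
proof -
  have "(\<Sum>x\<in>UNIV. x) = (\<Sum>x\<in>UNIV. (x + 1::'a))"
  proof (rule sum.reindex_bij_witness[of _ "\<lambda>x. x + 1" "\<lambda>x. x - 1"]) qed auto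
  then show ?thesis by (simp add: sum.distrib)
qed

lemma of_nat_k_ne:
  assumes "card (UNIV :: 'a set) > 2"
  shows "of_nat (card (UNIV :: 'a set) - 1) \<noteq> (0::'a::{finite,field})"
proof -
  have "of_nat (card (UNIV :: 'a set) - 1) = (of_nat (card (UNIV :: 'a set)) - 1 :: 'a)"
    using assms by (simp add: of_nat_diff)
  then show ?thesis by (simp add: of_nat_card_zero)
qed

definition gen1 :: "nat \<Rightarrow> nat \<Rightarrow> 'a::comm_ring_1 mpoly" where
  "gen1 k i = Var (i+1) ^ k + 1 - (Var i + 1) ^ k"

definition gen0 :: "nat \<Rightarrow> nat \<Rightarrow> 'a::comm_ring_1 mpoly" where
  "gen0 k i = Var (i+1) ^ k + Var 0 ^ k - (Var i + Var 0) ^ k"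

lemma mvars_gen1': "mvars (gen1 k i :: 'a::comm_ring_1 mpoly) \<subseteq> {i, i+1}"
proof -
  have "mvars (Var (i+1) ^ k :: 'a mpoly) \<subseteq> {i+1}" using mvars_pow[of "Var (i+1) :: 'a mpoly" k] by (simp add: mvars_Var)
  moreover have "mvars ((Var i + 1) ^ k :: 'a mpoly) \<subseteq> {i}"
    using mvars_pow[of "Var i + 1 :: 'a mpoly" k] mvars_add[of "Var i" "1::'a mpoly"] by (auto simp: mvars_Var)
  ultimately show ?thesis unfolding gen1_def
    using mvars_diff[of "Var (i+1) ^ k + 1" "(Var i + 1) ^ k :: 'a mpoly"] mvars_add[of "Var (i+1) ^ k" "1::'a mpoly"]
    by auto
qed

lemma mvars_gen0': "mvars (gen0 k i :: 'a::comm_ring_1 mpoly) \<subseteq> {0, i, i+1}"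
proof -
  have "mvars (Var (i+1) ^ k :: 'a mpoly) \<subseteq> {i+1}" using mvars_pow[of "Var (i+1) :: 'a mpoly" k] by (simp add: mvars_Var)
  moreover have "mvars (Var 0 ^ k :: 'a mpoly) \<subseteq> {0}" using mvars_pow[of "Var 0 :: 'a mpoly" k] by (simp add: mvars_Var)
  moreover have "mvars ((Var i + Var 0) ^ k :: 'a mpoly) \<subseteq> {0, i}"
    using mvars_pow[of "Var i + Var 0 :: 'a mpoly" k] mvars_add[of "Var i" "Var 0::'a mpoly"] by (auto simp: mvars_Var)
  ultimately show ?thesis unfolding gen0_def
    using mvars_diff[of "Var (i+1) ^ k + Var 0 ^ k" "(Var i + Var 0) ^ k :: 'a mpoly"] mvars_add[of "Var (i+1) ^ k" "Var 0 ^ k::'a mpoly"]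
    by blast
qed

lemma mvars_gen1: "i \<in> {1..l-1} \<Longrightarrow> mvars (gen1 k i :: 'a::comm_ring_1 mpoly) \<subseteq> {1..l}"
  using mvars_gen1'[of k i] by auto

lemma mvars_gen0: "i \<in> {1..l-1} \<Longrightarrow> mvars (gen0 k i :: 'a::comm_ring_1 mpoly) \<subseteq> {0..l}"
  using mvars_gen0'[of k i] by auto


lemma mon_deg_superset:
  assumes "finite S" "Poly_Mapping.keys m \<subseteq> S"
  shows "mon_deg m = (\<Sum>i\<in>S. Poly_Mapping.lookup m i)"
  unfolding mon_deg_def using assms
  by (intro sum.mono_neutral_left) (auto simp: in_keys_iff)

lemma mon_deg_add: "mon_deg (a + b) = mon_deg a + mon_deg b"
proof -
  let ?S = "Poly_Mapping.keys a \<union> Poly_Mapping.keys b"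
  have "mon_deg (a + b) = (\<Sum>i\<in>?S. Poly_Mapping.lookup (a + b) i)"
    by (rule mon_deg_superset) (auto simp: keys_plus_nat)
  also have "\<dots> = (\<Sum>i\<in>?S. Poly_Mapping.lookup a i) + (\<Sum>i\<in>?S. Poly_Mapping.lookup b i)"
    by (simp add: lookup_add sum.distrib)
  also have "\<dots> = mon_deg a + mon_deg b"
    by (subst (1 2) mon_deg_superset[of ?S]) auto
  finally show ?thesis .
qed

lemma mon_deg_single[simp]: "mon_deg (Poly_Mapping.single j n) = n"
  by (simp add: mon_deg_def)

lemma mon_deg_zero[simp]: "mon_deg 0 = 0"
  by (simp add: mon_deg_def)

lemma indep':
  assumes kne: "of_nat k \<noteq> (0::'a::field)"
    and "finite T" "inj_on \<beta> T" "\<forall>t\<in>T. Poly_Mapping.keys (\<beta> t) \<subseteq> {1..l} \<and> red_mon k l (\<beta> t)"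
    and "(\<Sum>t\<in>T. fps_const (c t) * (mev (Xf k l) (\<beta> t) :: 'a fps)) = 0"
  shows "\<forall>t\<in>T. c t = 0"
proof -
  define c' where "c' b = c (inv_into T \<beta> b)" for b
  have "(\<Sum>b\<in>\<beta> ` T. fps_const (c' b) * (mev (Xf k l) b :: 'a fps)) = (\<Sum>t\<in>T. fps_const (c' (\<beta> t)) * (mev (Xf k l) (\<beta> t) :: 'a fps))"
    by (simp add: sum.reindex[OF assms(3)])
  also have "\<dots> = 0" using assms(5) assms(3) by (simp add: c'_def inv_into_f_f)
  finally have "\<forall>b\<in>\<beta> ` T. c' b = 0"
    using indep[OF kne, where A="\<beta> ` T" and c=c'] assms(2,4) by auto
  then show ?thesis using assms(3) by (auto simp: c'_def inv_into_f_f)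
qed

section \<open>The non-homogeneous instance\<close>

lemma rhom_fps_const: "rhom (fps_const :: 'a::field \<Rightarrow> 'a fps)"
  by (simp add: rhom_def fps_const_add)

lemma ev_expand:
  assumes "rhom \<kappa>"
  shows "ev \<kappa> e r = (\<Sum>a\<in>Poly_Mapping.keys r. \<kappa> (Poly_Mapping.lookup r a) * mev e a)"
  by (simp add: ev_def)

lemma red_lookup_zero:
  assumes "\<forall>a\<in>Poly_Mapping.keys r. Poly_Mapping.lookup r a = 0"
  shows "r = 0"
  using assms by (auto simp: in_keys_iff intro!: poly_mapping_eqI)

lemma Xf_rel:
  assumes kne: "of_nat k \<noteq> (0::'a::field)" and i: "i \<in> {1..l-1}"
  shows "(1 + (Xf k l i :: 'a fps))^k = 1 + (Xf k l (i+1))^k"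
proof -
  have "l - i = Suc (l - (i+1))" using i by auto
  then show ?thesis using Xr_rel[OF kne, of "l - (i+1)"] i by (simp add: Xf_def)
qed

lemma kernel_red_1:
  assumes kne: "of_nat k \<noteq> (0::'a::field)" and l: "l > 1"
  shows "kernel_red (genideal (poly_ring {1..l}) (gen1 k ` {1..l-1})) {1..l} k l (gen1 k) (\<lambda>i. (Var i + 1)^k - 1)
           (fps_const :: 'a \<Rightarrow> 'a fps) (Xf k l)"
proof -
  interpret cring "poly_ring {1..l} :: 'a mpoly ring" by (rule cring_poly_ring)
  have k0: "k > 0" using kne by (cases k) auto
  have Gsub: "gen1 k ` {1..l-1} \<subseteq> carrier (poly_ring {1..l} :: 'a mpoly ring)"
    using mvars_gen1 by fastforce
  have Hv: "mvars ((Var i + 1)^k - 1 :: 'a mpoly) \<subseteq> {i}" for i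
    using mvars_pow[of "Var i + 1 :: 'a mpoly" k] mvars_add[of "Var i" "1::'a mpoly"] mvars_diff[of "(Var i + 1)^k" "1::'a mpoly"]
    by (auto simp: mvars_Var)
  have Hs: "supp_le i k ((Var i + 1)^k - 1 :: 'a mpoly)" for i
  proof -
    have "supp_le i 1 (Var i + 1 :: 'a mpoly)"
      using supp_le_Var[of i i] supp_le_mono[OF supp_le_one[of i], of 1] by (auto intro: supp_le_add)
    then have "supp_le i k ((Var i + 1)^k :: 'a mpoly)" using supp_le_pow[of i 1 _ k] by simp
    moreover have "supp_le i k (1 :: 'a mpoly)" using supp_le_mono[OF supp_le_one[of i], of k] by simp
    ultimately show ?thesis by (rule supp_le_diff)
  qed
  show ?thesis
  proof (intro kernel_red.intro reduction.intro kernel_red_axioms.intro)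
    show "ideal (genideal (poly_ring {1..l}) (gen1 k ` {1..l-1})) (poly_ring {1..l} :: 'a mpoly ring)"
      by (rule genideal_ideal[OF Gsub])
    show "{1..l} \<subseteq> {0..l}" by auto
    show "0 < k" by (rule k0)
    show "(gen1 k i :: 'a mpoly) \<in> genideal (poly_ring {1..l}) (gen1 k ` {1..l-1})" if "i \<in> {1..l-1}" for i
      using genideal_self[OF Gsub] that by auto
    show "Var (i+1) ^ k = gen1 k i + ((Var i + 1)^k - 1 :: 'a mpoly)" for i
      by (simp add: gen1_def)
    show "mvars ((Var i + 1)^k - 1 :: 'a mpoly) \<subseteq> {1..l}" if "i \<in> {1..l-1}" for i
      using Hv[of i] that by auto
    show "Poly_Mapping.lookup m j = 0" if "i \<in> {1..l-1}" "m \<in> Poly_Mapping.keys ((Var i + 1)^k - 1 :: 'a mpoly)" "2 \<le> j" "j \<noteq> i" for i m j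
    proof -
      have "j \<notin> Poly_Mapping.keys m" using Hv[of i] that by (auto simp: mvars_def)
      then show ?thesis by (simp add: in_keys_iff)
    qed
    show "Poly_Mapping.lookup m i \<le> k" if "i \<in> {1..l-1}" "m \<in> Poly_Mapping.keys ((Var i + 1)^k - 1 :: 'a mpoly)" for i m
      using Hs[of i] that by (auto simp: supp_le_def)
    show "rhom (fps_const :: 'a \<Rightarrow> 'a fps)" by (rule rhom_fps_const)
    show "genideal (poly_ring {1..l}) (gen1 k ` {1..l-1}) = genideal (poly_ring {1..l}) (gen1 k ` {1..l-1})" ..
    show "mvars (gen1 k i :: 'a mpoly) \<subseteq> {1..l}" if "i \<in> {1..l-1}" for i
      using mvars_gen1 that by blast
    show "ev fps_const (Xf k l) (gen1 k i :: 'a mpoly) = 0" if "i \<in> {1..l-1}" for i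
      using Xf_rel[OF kne that]
      by (simp add: gen1_def ev_diff[OF rhom_fps_const] ev_add[OF rhom_fps_const] ev_pow[OF rhom_fps_const]
            ev_one[OF rhom_fps_const] ev_Var[OF rhom_fps_const] add.commute)
    show "r = 0" if "mvars r \<subseteq> {1..l}" "red_poly k l r" "ev fps_const (Xf k l) r = 0" for r :: "'a mpoly"
    proof (rule red_lookup_zero)
      have "(\<Sum>a\<in>Poly_Mapping.keys r. fps_const (Poly_Mapping.lookup r a) * (mev (Xf k l) a :: 'a fps)) = 0"
        using that(3) by (simp add: ev_def)
      then show "\<forall>a\<in>Poly_Mapping.keys r. Poly_Mapping.lookup r a = 0"
        using indep[OF kne, where A="Poly_Mapping.keys r" and c="Poly_Mapping.lookup r" and l=l] that(1,2)
        by (auto simp: red_poly_def mvars_def)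
    qed
  qed
qed


definition k0 :: "'a::field \<Rightarrow> 'a fps poly" where
  "k0 c = [:fps_const c:]"

definition e0 :: "nat \<Rightarrow> nat \<Rightarrow> nat \<Rightarrow> 'a::field fps poly" where
  "e0 k l i = monom (Xf k l i) 1"

lemma rhom_k0: "rhom (k0 :: 'a::field \<Rightarrow> 'a fps poly)"
  by (simp add: rhom_def k0_def fps_const_add mult.commute)

lemma prod_monom:
  "(\<Prod>i\<in>S. monom (f i) 1 ^ n i) = monom (\<Prod>i\<in>S. f i ^ n i) (\<Sum>i\<in>S. n i)"
proof (induction S rule: infinite_finite_induct)
  case (insert x F)
  then show ?case by (simp add: monom_power mult_monom)
qed simp_all

lemma mev_monom: "mev (\<lambda>i. monom (f i) 1) a = monom (mev f a) (mon_deg a)"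
  unfolding mev_def mon_deg_def by (rule prod_monom)

lemma ev0_expand:
  "ev k0 (e0 k l) r = (\<Sum>a\<in>Poly_Mapping.keys r. monom (fps_const (Poly_Mapping.lookup r a) * mev (Xf k l) a) (mon_deg a))"
  unfolding ev_def e0_def mev_monom k0_def
  by (intro sum.cong refl) (simp add: smult_monom)

lemma coeff_ev0:
  "coeff (ev k0 (e0 k l) r) d = (\<Sum>a\<in>{a\<in>Poly_Mapping.keys r. mon_deg a = d}. fps_const (Poly_Mapping.lookup r a) * mev (Xf k l) a)"
  unfolding ev0_expand coeff_sum coeff_monom
  by (simp add: sum.inter_filter[symmetric] if_distrib eq_commute)

definition drop0 :: "(nat \<Rightarrow>\<^sub>0 nat) \<Rightarrow> (nat \<Rightarrow>\<^sub>0 nat)" where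
  "drop0 a = a - Poly_Mapping.single 0 (Poly_Mapping.lookup a 0)"

lemma lookup_drop0: "Poly_Mapping.lookup (drop0 a) i = (if i = 0 then 0 else Poly_Mapping.lookup a i)"
  by (simp add: drop0_def lookup_minus lookup_single when_def)

lemma drop0_split: "a = drop0 a + Poly_Mapping.single 0 (Poly_Mapping.lookup a 0)"
  by (rule poly_mapping_eqI) (simp add: lookup_add lookup_drop0 lookup_single when_def)

lemma keys_drop0: "Poly_Mapping.keys (drop0 a) = Poly_Mapping.keys a - {0}"
  by (auto simp: in_keys_iff lookup_drop0 split: if_splits)

lemma mev_drop0:
  assumes "X 0 = 1"
  shows "mev X (drop0 a) = mev X a"
proof -
  have "mev X a = mev X (drop0 a) * mev X (Poly_Mapping.single 0 (Poly_Mapping.lookup a 0))"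
    by (subst drop0_split) (simp add: mev_add)
  then show ?thesis using assms by (simp add: mev_single)
qed

lemma drop0_inj:
  assumes "drop0 a = drop0 b" "mon_deg a = mon_deg b"
  shows "a = b"
proof -
  have "mon_deg a = mon_deg (drop0 a) + Poly_Mapping.lookup a 0"
    by (subst drop0_split) (simp add: mon_deg_add)
  moreover have "mon_deg b = mon_deg (drop0 b) + Poly_Mapping.lookup b 0"
    by (subst drop0_split) (simp add: mon_deg_add)
  ultimately have "Poly_Mapping.lookup a 0 = Poly_Mapping.lookup b 0" using assms by simp
  then show ?thesis using assms(1) drop0_split[of a] drop0_split[of b] by metis
qed

lemma Xf0: "Xf k l 0 = 1" by (simp add: Xf_def)

lemma kernel_red_0:
  assumes kne: "of_nat k \<noteq> (0::'a::field)" and l: "l > 1"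
  shows "kernel_red (genideal (poly_ring {0..l}) (gen0 k ` {1..l-1})) {0..l} k l (gen0 k) (\<lambda>i. (Var i + Var 0)^k - Var 0 ^ k)
           (k0 :: 'a \<Rightarrow> 'a fps poly) (e0 k l)"
proof -
  interpret cring "poly_ring {0..l} :: 'a mpoly ring" by (rule cring_poly_ring)
  have kk: "k > 0" using kne by (cases k) auto
  have Gsub: "gen0 k ` {1..l-1} \<subseteq> carrier (poly_ring {0..l} :: 'a mpoly ring)"
    using mvars_gen0 by fastforce
  have Hv: "mvars ((Var i + Var 0)^k - Var 0 ^ k :: 'a mpoly) \<subseteq> {0, i}" for i
  proof -
    have "mvars ((Var i + Var 0)^k :: 'a mpoly) \<subseteq> {0, i}"
      using mvars_pow[of "Var i + Var 0 :: 'a mpoly" k] mvars_add[of "Var i" "Var 0::'a mpoly"] by (auto simp: mvars_Var)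
    moreover have "mvars (Var 0 ^ k :: 'a mpoly) \<subseteq> {0}" using mvars_pow[of "Var 0 :: 'a mpoly" k] by (simp add: mvars_Var)
    ultimately show ?thesis using mvars_diff[of "(Var i + Var 0)^k" "Var 0 ^ k :: 'a mpoly"] by blast
  qed
  have Hs: "supp_le i k ((Var i + Var 0)^k - Var 0 ^ k :: 'a mpoly)" if "i \<noteq> 0" for i
  proof -
    have v0: "supp_le i 0 (Var 0 :: 'a mpoly)" using supp_le_Var[of i 0] that by simp
    have "supp_le i 1 (Var i + Var 0 :: 'a mpoly)"
      using supp_le_Var[of i i] supp_le_mono[OF v0, of 1] by (auto intro: supp_le_add)
    then have "supp_le i k ((Var i + Var 0)^k :: 'a mpoly)" using supp_le_pow[of i 1 _ k] by simp
    moreover have "supp_le i k (Var 0 ^ k :: 'a mpoly)" using supp_le_pow[OF v0, of k] supp_le_mono by fastforce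
    ultimately show ?thesis by (rule supp_le_diff)
  qed
  show ?thesis
  proof (intro kernel_red.intro reduction.intro kernel_red_axioms.intro)
    show "ideal (genideal (poly_ring {0..l}) (gen0 k ` {1..l-1})) (poly_ring {0..l} :: 'a mpoly ring)"
      by (rule genideal_ideal[OF Gsub])
    show "{0..l} \<subseteq> {0..l}" by auto
    show "0 < k" by (rule kk)
    show "(gen0 k i :: 'a mpoly) \<in> genideal (poly_ring {0..l}) (gen0 k ` {1..l-1})" if "i \<in> {1..l-1}" for i
      using genideal_self[OF Gsub] that by auto
    show "Var (i+1) ^ k = gen0 k i + ((Var i + Var 0)^k - Var 0 ^ k :: 'a mpoly)" for i
      by (simp add: gen0_def)
    show "mvars ((Var i + Var 0)^k - Var 0 ^ k :: 'a mpoly) \<subseteq> {0..l}" if "i \<in> {1..l-1}" for i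
      using Hv[of i] that by auto
    show "Poly_Mapping.lookup m j = 0" if "i \<in> {1..l-1}" "m \<in> Poly_Mapping.keys ((Var i + Var 0)^k - Var 0 ^ k :: 'a mpoly)" "2 \<le> j" "j \<noteq> i" for i m j
    proof -
      have "j \<notin> Poly_Mapping.keys m" using Hv[of i] that by (auto simp: mvars_def)
      then show ?thesis by (simp add: in_keys_iff)
    qed
    show "Poly_Mapping.lookup m i \<le> k" if "i \<in> {1..l-1}" "m \<in> Poly_Mapping.keys ((Var i + Var 0)^k - Var 0 ^ k :: 'a mpoly)" for i m
      using Hs[of i] that by (auto simp: supp_le_def)
    show "rhom (k0 :: 'a \<Rightarrow> 'a fps poly)" by (rule rhom_k0)
    show "genideal (poly_ring {0..l}) (gen0 k ` {1..l-1}) = genideal (poly_ring {0..l}) (gen0 k ` {1..l-1})" ..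
    show "mvars (gen0 k i :: 'a mpoly) \<subseteq> {0..l}" if "i \<in> {1..l-1}" for i
      using mvars_gen0 that by blast
    show "ev k0 (e0 k l) (gen0 k i :: 'a mpoly) = 0" if "i \<in> {1..l-1}" for i
    proof -
      have "ev k0 (e0 k l) (gen0 k i :: 'a mpoly) = monom ((Xf k l (i+1))^k + 1 - (Xf k l i + 1)^k) k"
        by (simp add: gen0_def ev_diff[OF rhom_k0] ev_add[OF rhom_k0] ev_pow[OF rhom_k0]
            ev_Var[OF rhom_k0] e0_def Xf0 add_monom monom_power diff_monom)
      also have "\<dots> = 0" using Xf_rel[OF kne that] by (simp add: add.commute)
      finally show ?thesis .
    qed
    show "r = 0" if "mvars r \<subseteq> {0..l}" "red_poly k l r" "ev k0 (e0 k l) r = 0" for r :: "'a mpoly"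
    proof (rule red_lookup_zero, intro ballI)
      fix a assume a: "a \<in> Poly_Mapping.keys r"
      define S where "S = {b\<in>Poly_Mapping.keys r. mon_deg b = mon_deg a}"
      have "(\<Sum>b\<in>S. fps_const (Poly_Mapping.lookup r b) * mev (Xf k l) (drop0 b)) = (0 :: 'a fps)"
        using coeff_ev0[of k l r "mon_deg a"] that(3) by (simp add: S_def mev_drop0[where X="Xf k l", OF Xf0[of k l]])
      moreover have "inj_on drop0 S" by (auto simp: S_def inj_on_def intro: drop0_inj)
      moreover have "\<forall>b\<in>S. Poly_Mapping.keys (drop0 b) \<subseteq> {1..l} \<and> red_mon k l (drop0 b)"
        using that(1,2) by (auto simp: S_def keys_drop0 red_poly_def red_mon_def lookup_drop0 mvars_def)
      ultimately have "\<forall>b\<in>S. Poly_Mapping.lookup r b = 0"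
        using indep'[OF kne, where T=S and \<beta>=drop0 and c="Poly_Mapping.lookup r" and l=l] by (simp add: S_def)
      then show "Poly_Mapping.lookup r a = 0" using a by (simp add: S_def)
    qed
  qed
qed


definition hmap :: "((nat \<Rightarrow>\<^sub>0 nat) \<Rightarrow> (nat \<Rightarrow>\<^sub>0 nat)) \<Rightarrow> 'a::comm_ring_1 mpoly \<Rightarrow> 'a mpoly" where
  "hmap h p = (\<Sum>m\<in>Poly_Mapping.keys p. Poly_Mapping.single (h m) (Poly_Mapping.lookup p m))"

lemma homogenize_hmap: "homogenize p = hmap (\<lambda>m. m + Poly_Mapping.single 0 (total_deg p - mon_deg m)) p"
  by (simp add: homogenize_def hmap_def)

lemma hmap_add: "hmap h (p + q) = hmap h p + hmap h q"
  unfolding hmap_def by (rule setsum_keys_plus_distrib) (simp_all add: single_add)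

lemma hmap_zero[simp]: "hmap h 0 = 0" by (simp add: hmap_def)

lemma hmap_uminus: "hmap h (- p) = - hmap h p"
proof -
  have "hmap h p + hmap h (- p) = 0" using hmap_add[of h p "-p"] by simp
  then show ?thesis by (simp add: eq_neg_iff_add_eq_0 add.commute)
qed

lemma hmap_diff: "hmap h (p - q) = hmap h p - hmap h q"
  using hmap_add[of h p "-q"] hmap_uminus[of h q] by simp

lemma hmap_sum: "hmap h (sum f A) = (\<Sum>a\<in>A. hmap h (f a))"
  by (induction A rule: infinite_finite_induct) (auto simp: hmap_add)

lemma hmap_single: "hmap h (Poly_Mapping.single m c) = Poly_Mapping.single (h m) c"
  by (simp add: hmap_def)

lemma mon_deg_le_total_deg: "m \<in> Poly_Mapping.keys p \<Longrightarrow> mon_deg m \<le> total_deg p"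
  by (auto simp: total_deg_def)

lemma keys_homogenize:
  "Poly_Mapping.keys (homogenize p) \<subseteq> (\<lambda>m. m + Poly_Mapping.single 0 (total_deg p - mon_deg m)) ` Poly_Mapping.keys p"
proof -
  have "Poly_Mapping.keys (homogenize p) \<subseteq> (\<Union>m\<in>Poly_Mapping.keys p. Poly_Mapping.keys (Poly_Mapping.single (m + Poly_Mapping.single 0 (total_deg p - mon_deg m)) (Poly_Mapping.lookup p m)))"
    unfolding homogenize_def by (rule keys_sum)
  then show ?thesis by (auto split: if_splits)
qed

lemma mvars_homogenize: "mvars (homogenize p) \<subseteq> insert 0 (mvars p)"
  using keys_homogenize[of p] by (fastforce simp: mvars_def keys_plus_nat split: if_splits)

lemma homogeneous_homogenize: "homogeneous (homogenize p)"
proof -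
  let ?D = "total_deg p"
  have deg: "mon_deg m = ?D" if "m \<in> Poly_Mapping.keys (homogenize p)" for m
  proof -
    have "m \<in> (\<lambda>m. m + Poly_Mapping.single 0 (total_deg p - mon_deg m)) ` Poly_Mapping.keys p"
      using keys_homogenize[of p] that by blast
    then obtain m0 where m0: "m0 \<in> Poly_Mapping.keys p" "m = m0 + Poly_Mapping.single 0 (?D - mon_deg m0)"
      by (rule imageE) simp
    then show ?thesis using mon_deg_le_total_deg[OF m0(1)] by (simp add: mon_deg_add)
  qed
  show ?thesis
  proof (cases "homogenize p = 0")
    case True then show ?thesis by (simp add: homogeneous_def)
  next
    case False
    then have ne: "Poly_Mapping.keys (homogenize p) \<noteq> {}" by simp
    obtain m1 where "m1 \<in> Poly_Mapping.keys (homogenize p)" using ne by blast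
    then have "mon_deg ` Poly_Mapping.keys (homogenize p) = {?D}" using deg by force
    then have "total_deg (homogenize p) = ?D" using False by (simp add: total_deg_def)
    then show ?thesis using deg by (simp add: homogeneous_def)
  qed
qed

lemma ev0_homogenize:
  "ev k0 (e0 k l) (homogenize p) = monom (ev fps_const (Xf k l) p :: 'a::field fps) (total_deg p)"
proof -
  let ?D = "total_deg p"
  have "ev k0 (e0 k l) (homogenize p) =
     (\<Sum>m\<in>Poly_Mapping.keys p. ev k0 (e0 k l) (Poly_Mapping.single (m + Poly_Mapping.single 0 (?D - mon_deg m)) (Poly_Mapping.lookup p m)))"
    unfolding homogenize_def by (rule ev_sum[OF rhom_k0])
  also have "\<dots> = (\<Sum>m\<in>Poly_Mapping.keys p. monom (fps_const (Poly_Mapping.lookup p m) * mev (Xf k l) m) ?D)"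
  proof (intro sum.cong refl)
    fix m assume m: "m \<in> Poly_Mapping.keys p"
    have "mev (e0 k l) (m + Poly_Mapping.single 0 (?D - mon_deg m)) = monom (mev (Xf k l) m :: 'a fps) (mon_deg m) * monom 1 (?D - mon_deg m)"
      unfolding mev_add e0_def mev_monom by (simp add: Xf0 mev_single)
    also have "\<dots> = monom (mev (Xf k l) m) ?D"
      using mon_deg_le_total_deg[OF m] by (simp add: mult_monom)
    finally show "ev k0 (e0 k l) (Poly_Mapping.single (m + Poly_Mapping.single 0 (?D - mon_deg m)) (Poly_Mapping.lookup p m))
        = monom (fps_const (Poly_Mapping.lookup p m) * mev (Xf k l) m) ?D"
      by (simp add: ev_single[OF rhom_k0] k0_def smult_monom)
  qed
  also have "\<dots> = monom (ev fps_const (Xf k l) p) ?D"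
    by (simp add: ev_def monom_sum)
  finally show ?thesis .
qed


lemma of_nat_single_mult: "of_nat c * Poly_Mapping.single m 1 = (Poly_Mapping.single m (of_nat c) :: 'a::comm_ring_1 mpoly)"
proof -
  have "of_nat c * Poly_Mapping.single m 1 = Poly_Mapping.single 0 (of_nat c) * (Poly_Mapping.single m 1 :: 'a mpoly)" by simp
  also have "\<dots> = Poly_Mapping.single (0 + m) (of_nat c * 1)" by (simp only: mult_single)
  finally show ?thesis by simp
qed

lemma gen1_expand:
  "(gen1 k i :: 'a::comm_ring_1 mpoly) = Poly_Mapping.single (Poly_Mapping.single (i+1) k) 1 + Poly_Mapping.single 0 1
     - (\<Sum>j\<le>k. Poly_Mapping.single (Poly_Mapping.single i j) (of_nat (k choose j)))"
proof -
  have "(Var i + 1 :: 'a mpoly) ^ k = (\<Sum>j\<le>k. of_nat (k choose j) * Var i ^ j * 1 ^ (k - j))"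
    by (rule binomial_ring)
  also have "\<dots> = (\<Sum>j\<le>k. Poly_Mapping.single (Poly_Mapping.single i j) (of_nat (k choose j)))"
    by (simp add: Var_pow of_nat_single_mult)
  finally show ?thesis by (simp add: gen1_def Var_pow)
qed

lemma gen0_expand:
  "(gen0 k i :: 'a::comm_ring_1 mpoly) = Poly_Mapping.single (Poly_Mapping.single (i+1) k) 1 + Poly_Mapping.single (Poly_Mapping.single 0 k) 1
     - (\<Sum>j\<le>k. Poly_Mapping.single (Poly_Mapping.single i j + Poly_Mapping.single 0 (k - j)) (of_nat (k choose j)))"
proof -
  have "(Var i + Var 0 :: 'a mpoly) ^ k = (\<Sum>j\<le>k. of_nat (k choose j) * Var i ^ j * Var 0 ^ (k - j))"
    by (rule binomial_ring)
  also have "\<dots> = (\<Sum>j\<le>k. Poly_Mapping.single (Poly_Mapping.single i j + Poly_Mapping.single 0 (k - j)) (of_nat (k choose j)))"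
    by (simp add: Var_pow mult_single mult.assoc of_nat_single_mult)
  finally show ?thesis by (simp add: gen0_def Var_pow)
qed

lemma total_deg_gen1:
  assumes "k > 0"
  shows "total_deg (gen1 k i :: 'a::comm_ring_1 mpoly) = k"
proof -
  let ?A = "Poly_Mapping.single (i+1) k"
  define S where "S = {?A, 0} \<union> (\<lambda>j. Poly_Mapping.single i j) ` {..k}"
  have keys: "Poly_Mapping.keys (gen1 k i :: 'a mpoly) \<subseteq> S"
  proof -
    have "Poly_Mapping.keys (\<Sum>j\<le>k. Poly_Mapping.single (Poly_Mapping.single i j) (of_nat (k choose j)) :: 'a mpoly)
          \<subseteq> (\<Union>j\<le>k. Poly_Mapping.keys (Poly_Mapping.single (Poly_Mapping.single i j) (of_nat (k choose j)) :: 'a mpoly))"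
      by (rule keys_sum)
    also have "\<dots> \<subseteq> (\<lambda>j. Poly_Mapping.single i j) ` {..k}" by auto
    finally have s: "Poly_Mapping.keys (\<Sum>j\<le>k. Poly_Mapping.single (Poly_Mapping.single i j) (of_nat (k choose j)) :: 'a mpoly) \<subseteq> (\<lambda>j. Poly_Mapping.single i j) ` {..k}" .
    have "Poly_Mapping.keys (Poly_Mapping.single ?A 1 + Poly_Mapping.single 0 1 :: 'a mpoly) \<subseteq> {?A, 0}"
      using keys_add[of "Poly_Mapping.single ?A 1 :: 'a mpoly" "Poly_Mapping.single 0 1"] by auto
    then show ?thesis unfolding gen1_expand S_def
      using s keys_diff[of "Poly_Mapping.single ?A 1 + Poly_Mapping.single 0 1 :: 'a mpoly"
         "\<Sum>j\<le>k. Poly_Mapping.single (Poly_Mapping.single i j) (of_nat (k choose j)) :: 'a mpoly"] by blast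
  qed
  have le: "mon_deg m \<le> k" if "m \<in> S" for m using that by (auto simp: S_def)
  have neq1: "Poly_Mapping.single i j \<noteq> ?A" for j
  proof
    assume "Poly_Mapping.single i j = ?A"
    then have "Poly_Mapping.lookup (Poly_Mapping.single i j) (i+1) = Poly_Mapping.lookup ?A (i+1)" by simp
    then show False using assms by (simp add: lookup_single)
  qed
  have neq2: "(0 :: nat \<Rightarrow>\<^sub>0 nat) \<noteq> ?A"
  proof
    assume "0 = ?A"
    then have "Poly_Mapping.lookup 0 (i+1) = Poly_Mapping.lookup ?A (i+1)" by simp
    then show False using assms by simp
  qed
  have "Poly_Mapping.lookup (gen1 k i :: 'a mpoly) ?A = 1"
  proof -
    have s0: "Poly_Mapping.lookup (\<Sum>j\<le>k. Poly_Mapping.single (Poly_Mapping.single i j) (of_nat (k choose j)) :: 'a mpoly) ?A = 0"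
      unfolding lookup_sum by (intro sum.neutral ballI, rule lookup_single_not_eq, rule neq1)
    have s1: "Poly_Mapping.lookup (Poly_Mapping.single 0 1 :: 'a mpoly) ?A = 0"
      by (rule lookup_single_not_eq) (rule neq2)
    show ?thesis unfolding gen1_expand lookup_minus lookup_add s0 s1 by simp
  qed
  then have inA: "?A \<in> Poly_Mapping.keys (gen1 k i :: 'a mpoly)" by (simp add: in_keys_iff)
  then have nz: "(gen1 k i :: 'a mpoly) \<noteq> 0" by auto
  have "Max (mon_deg ` Poly_Mapping.keys (gen1 k i :: 'a mpoly)) = k"
  proof (rule Max_eqI)
    show "finite (mon_deg ` Poly_Mapping.keys (gen1 k i :: 'a mpoly))" by simp
    show "y \<le> k" if "y \<in> mon_deg ` Poly_Mapping.keys (gen1 k i :: 'a mpoly)" for y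
      using that keys le by auto
    show "k \<in> mon_deg ` Poly_Mapping.keys (gen1 k i :: 'a mpoly)"
      using inA by (intro image_eqI[of _ _ ?A]) auto
  qed
  then show ?thesis using nz by (simp add: total_deg_def)
qed

lemma hmap_one: "hmap h (1 :: 'a::comm_ring_1 mpoly) = Poly_Mapping.single (h 0) 1"
  using hmap_single[of h 0 "1::'a"] by simp

lemma homogenize_gen1:
  assumes "k > 0"
  shows "homogenize (gen1 k i :: 'a::comm_ring_1 mpoly) = gen0 k i"
proof -
  define h where "h m = m + Poly_Mapping.single 0 (k - mon_deg m)" for m :: "nat \<Rightarrow>\<^sub>0 nat"
  have "homogenize (gen1 k i :: 'a mpoly) = hmap h (gen1 k i)"
    unfolding homogenize_hmap total_deg_gen1[OF assms] h_def ..
  also have "\<dots> = gen0 k i"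
    unfolding gen1_expand gen0_expand
    by (simp add: hmap_add hmap_diff hmap_sum hmap_single hmap_one h_def)
  finally show ?thesis .
qed


theorem proposition3p1:
  fixes l :: nat
  assumes "card (UNIV :: 'a set) > 2"
    and "l > 1"
  defines "q \<equiv> card (UNIV :: 'a set)"
  shows "primeideal
           (genideal (poly_ring {1..l})
              ((\<lambda>i. (Var (i+1)) ^ (q-1) + 1 - (Var i + 1) ^ (q-1) :: ('a::{finite,field}) mpoly) ` {1..l-1}))
           (poly_ring {1..l})
       \<and> homogeneous_ideal (poly_ring {0..l})
           (genideal (poly_ring {0..l})
              ((\<lambda>i. (Var (i+1)) ^ (q-1) + (Var 0) ^ (q-1) - (Var i + Var 0) ^ (q-1) :: 'a mpoly) ` {1..l-1}))
       \<and> primeideal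
           (genideal (poly_ring {0..l})
              ((\<lambda>i. (Var (i+1)) ^ (q-1) + (Var 0) ^ (q-1) - (Var i + Var 0) ^ (q-1) :: 'a mpoly) ` {1..l-1}))
           (poly_ring {0..l})
       \<and> genideal (poly_ring {0..l})
              ((\<lambda>i. (Var (i+1)) ^ (q-1) + (Var 0) ^ (q-1) - (Var i + Var 0) ^ (q-1) :: 'a mpoly) ` {1..l-1})
         = homogenization_ideal (poly_ring {0..l})
             (genideal (poly_ring {1..l})
              ((\<lambda>i. (Var (i+1)) ^ (q-1) + 1 - (Var i + 1) ^ (q-1) :: 'a mpoly) ` {1..l-1}))"
proof -
  define k where "k = q - 1"
  have kne: "of_nat k \<noteq> (0::'a)" using of_nat_k_ne[OF assms(1)] by (simp add: k_def q_def)
  have k0: "k > 0" using kne by (cases k) auto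
  have g1: "(\<lambda>i. (Var (i+1)) ^ (q-1) + 1 - (Var i + 1) ^ (q-1) :: 'a mpoly) = gen1 k"
    by (simp add: fun_eq_iff gen1_def k_def)
  have g0: "(\<lambda>i. (Var (i+1)) ^ (q-1) + (Var 0) ^ (q-1) - (Var i + Var 0) ^ (q-1) :: 'a mpoly) = gen0 k"
    by (simp add: fun_eq_iff gen0_def k_def)
  interpret K1: kernel_red "genideal (poly_ring {1..l}) (gen1 k ` {1..l-1})" "{1..l}" k l "gen1 k"
    "\<lambda>i. (Var i + 1)^k - 1" "fps_const :: 'a \<Rightarrow> 'a fps" "Xf k l"
    by (rule kernel_red_1[OF kne assms(2)])
  interpret K0: kernel_red "genideal (poly_ring {0..l}) (gen0 k ` {1..l-1})" "{0..l}" k l "gen0 k"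
    "\<lambda>i. (Var i + Var 0)^k - Var 0 ^ k" "k0 :: 'a \<Rightarrow> 'a fps poly" "e0 k l"
    by (rule kernel_red_0[OF kne assms(2)])
  interpret R0: cring "poly_ring {0..l} :: 'a mpoly ring" by (rule cring_poly_ring)
  let ?I1 = "genideal (poly_ring {1..l}) (gen1 k ` {1..l-1}) :: 'a mpoly set"
  let ?I0 = "genideal (poly_ring {0..l}) (gen0 k ` {1..l-1}) :: 'a mpoly set"
  have p1: "primeideal ?I1 (poly_ring {1..l})" by (rule K1.J_prime)
  have p0: "primeideal ?I0 (poly_ring {0..l})" by (rule K0.J_prime)
  have gh: "gen0 k i = homogenize (gen1 k i :: 'a mpoly)" for i
    by (simp add: homogenize_gen1[OF k0])
  have h0: "homogeneous_ideal (poly_ring {0..l}) ?I0"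
    unfolding homogeneous_ideal_def
  proof (intro conjI exI[of _ "gen0 k ` {1..l-1}"])
    show "ideal ?I0 (poly_ring {0..l})" by (rule K0.J)
    show "gen0 k ` {1..l-1} \<subseteq> carrier (poly_ring {0..l} :: 'a mpoly ring)"
      using mvars_gen0 by fastforce
    show "\<forall>g\<in>gen0 k ` {1..l-1}. homogeneous (g :: 'a mpoly)"
      using gh homogeneous_homogenize by auto
  qed simp
  have homog_sub: "homogenize ` ?I1 \<subseteq> ?I0"
  proof
    fix x assume "x \<in> homogenize ` ?I1"
    then obtain f where f: "f \<in> ?I1" "x = homogenize f" by blast
    have fv: "mvars f \<subseteq> {1..l}" "ev fps_const (Xf k l) f = 0"
      using f(1) unfolding K1.J_eq by auto
    have "mvars x \<subseteq> {0..l}" using f(2) fv(1) mvars_homogenize[of f] by fastforce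
    moreover have "ev k0 (e0 k l) x = 0" using f(2) fv(2) by (simp add: ev0_homogenize)
    ultimately show "x \<in> ?I0" unfolding K0.J_eq by simp
  qed
  have hcarr: "homogenize ` ?I1 \<subseteq> carrier (poly_ring {0..l} :: 'a mpoly ring)"
  proof
    fix x assume "x \<in> homogenize ` ?I1"
    then have "x \<in> ?I0" using homog_sub by blast
    then have "mvars x \<subseteq> {0..l}" by (subst (asm) K0.J_eq) simp
    then show "x \<in> carrier (poly_ring {0..l} :: 'a mpoly ring)" by simp
  qed
  have eq: "?I0 = homogenization_ideal (poly_ring {0..l}) ?I1"
    unfolding homogenization_ideal_def
  proof
    show "?I0 \<subseteq> genideal (poly_ring {0..l}) (homogenize ` ?I1)"
    proof (rule R0.genideal_minimal[OF R0.genideal_ideal[OF hcarr]])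
      have "gen0 k ` {1..l-1} \<subseteq> homogenize ` ?I1"
        using gh K1.G by auto
      then show "gen0 k ` {1..l-1} \<subseteq> genideal (poly_ring {0..l}) (homogenize ` ?I1)"
        using R0.genideal_self[OF hcarr] by blast
    qed
    show "genideal (poly_ring {0..l}) (homogenize ` ?I1) \<subseteq> ?I0"
      by (rule R0.genideal_minimal[OF K0.J homog_sub])
  qed
  show ?thesis unfolding g1 g0 using p1 p0 h0 eq by blast
qed


end
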